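(* For any digraph $G$, $\mathrm{sstat}_{\mathtt{vsc}}(G)\ge 1+\mathrm{cr}(G)$.
   Context: All digraphs are finite, simple, without self-loops and have at least one vertex (induced subgraphs appearing as game data may be empty). For a finite set $V$, $V^*$ is the set of finite words over $V$, $\epsilon$ the empty word; $X \preceq Y$ means $X$ is a prefix of $Y$; for $X=a_1\cdots a_n$, $|X|=n$ and $\mathrm{let}(X)=\{a_1,\dots,a_n\}$. $A\Delta B$ is symmetric difference. For $X\subseteq V(G)$, $G\setminus X$ is the subgraph induced by $V(G)\setminus X$. Induced subgraphs are identified with their vertex sets. Cycle-rank $\mathrm{cr}(G)$: $0$ if $G$ is acyclic; $1+\min_{v\in V(G)}\mathrm{cr}(G\setminus\{v\})$ if $G$ is strongly connected (and not acyclic); otherwise the maximum of $\mathrm{cr}(H)$ over strongly connected components $H$ of $G$. A position is a pair $(X,R)$ with $X\in V(G)^*$ and $R$ a (possibly empty) induced subgraph of $G\setminus\mathrm{let}(X)$; it is a $\mathtt{vsc}$-position if $R$ is a strongly connected component of $G\setminus\mathrm{let}(X)$. A $\mathtt{vsc}$-position $(X',R')$ is a $\mathtt{vsc}$-successor of $(X,R)$ if ($X\preceq X'$ or $X'\preceq X$), $|\mathrm{let}(X)\Delta\mathrm{let}(X')|=1$, and every $v'\in R'$ lies in the same strongly connected component of $G\setminus(\mathrm{let}(X)\cap\mathrm{let}(X'))$ as some $v\in R$. If $(\epsilon,G)$ is not a $\mathtt{vsc}$-position it is nevertheless admitted as a special position whose $\mathtt{vsc}$-successors are exactly the $\mathtt{vsc}$-positions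 $(\epsilon,R)$. A $\mathtt{vsc}$-search from $(X_0,R_0)$ is a finite or infinite sequence of such positions with each $(X_{i+1},R_{i+1})$ a $\mathtt{vsc}$-successor of $(X_i,R_i)$; it is complete if it is infinite or $R_n=\emptyset$ for some $n$, and a complete search is winning for the searchers if $R_n=\emptyset$ for some $n$. A complete search from $(\epsilon,G)$ is searcher-stationary if $X_i\preceq X_{i+1}$ for all $i$ with $R_i\neq\emptyset$, and uses at most $k$ searchers if $|X_i|\le k$ for all $i$. A $\mathtt{vsc}$-strategy is a function $\sigma$ from $\mathtt{vsc}$-positions to $V(G)^*$ such that $\sigma(X,R)$ is the first component of some $\mathtt{vsc}$-successor of $(X,R)$; a search is consistent with $\sigma$ if $X_{i+1}=\sigma(X_i,R_i)$ for all $i$. $\sigma$ is winning if every complete consistent search from $(\epsilon,G)$ is winning for the searchers; it is searcher-stationary / uses at most $k$ searchers if every complete consistent search from $(\epsilon,G)$ has that property. $\mathrm{sstat}_{\mathtt{vsc}}(G)$ is the minimum $k$ such that there is a searcher-stationary winning $\mathtt{vsc}$-strategy using at most $k$ searchers. *)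

theory Defs
  imports Main "HOL-Library.Sublist" "HOL-Library.Extended_Nat"
begin

text \<open>A digraph is given by a finite nonempty vertex set V and an irreflexive
edge relation E on V. Induced subgraphs are identified with vertex sets H.\<close>

definition digraph :: "'a set \<Rightarrow> ('a \<times> 'a) set \<Rightarrow> bool" where
  "digraph V E \<longleftrightarrow> finite V \<and> V \<noteq> {} \<and> E \<subseteq> V \<times> V \<and> (\<forall>v. (v, v) \<notin> E)"

definition reach :: "('a \<times> 'a) set \<Rightarrow> 'a set \<Rightarrow> 'a \<Rightarrow> 'a \<Rightarrow> bool" where
  "reach E H u v \<longleftrightarrow> (u, v) \<in> (E \<inter> (H \<times> H))\<^sup>*"

definition same_scc :: "('a \<times> 'a) set \<Rightarrow> 'a set \<Rightarrow> 'a \<Rightarrow> 'a \<Rightarrow> bool" where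
  "same_scc E H u v \<longleftrightarrow> u \<in> H \<and> v \<in> H \<and> reach E H u v \<and> reach E H v u"

definition sccs :: "('a \<times> 'a) set \<Rightarrow> 'a set \<Rightarrow> 'a set set" where
  "sccs E H = {S. \<exists>u\<in>H. S = {v. same_scc E H u v}}"

definition strongly_connected :: "('a \<times> 'a) set \<Rightarrow> 'a set \<Rightarrow> bool" where
  "strongly_connected E H \<longleftrightarrow> H \<noteq> {} \<and> (\<forall>u\<in>H. \<forall>v\<in>H. reach E H u v)"

definition acyclic_sub :: "('a \<times> 'a) set \<Rightarrow> 'a set \<Rightarrow> bool" where
  "acyclic_sub E H \<longleftrightarrow> (\<forall>u\<in>H. (u, u) \<notin> (E \<inter> (H \<times> H))\<^sup>+)"

lemma scc_proper_subset:
  assumes "S \<in> sccs E H" "\<not> strongly_connected E H"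
  shows "S \<subset> H"
proof -
  from assms(1) obtain u where u: "u \<in> H" "S = {v. same_scc E H u v}"
    unfolding sccs_def by blast
  have sub: "S \<subseteq> H" using u unfolding same_scc_def by auto
  show ?thesis
  proof (rule ccontr)
    assume "\<not> S \<subset> H"
    then have "S = H" using sub by blast
    then have "\<forall>v\<in>H. reach E H u v \<and> reach E H v u" using u unfolding same_scc_def by auto
    then have "\<forall>x\<in>H. \<forall>y\<in>H. reach E H x y"
      unfolding reach_def by (meson rtrancl_trans)
    then show False using assms(2) u(1) unfolding strongly_connected_def by blast
  qed
qed

function cr :: "('a \<times> 'a) set \<Rightarrow> 'a set \<Rightarrow> nat" where
  "cr E H =
     (if infinite H \<or> acyclic_sub E H then 0
      else if strongly_connected E H then 1 + Min ((\<lambda>v. cr E (H - {v})) ` H)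
      else Max ((\<lambda>S. cr E S) ` sccs E H))"
  by pat_completeness auto
termination
proof (relation "measure (\<lambda>(E, H). card H)")
  show "wf (measure (\<lambda>(E, H). card H))" by simp
next
  fix E :: "('a \<times> 'a) set" and H v
  assume "\<not> (infinite H \<or> acyclic_sub E H)" "v \<in> H"
  then show "((E, H - {v}), E, H) \<in> measure (\<lambda>(E, H). card H)"
    using card_Diff1_less[of H v] by simp
next
  fix E :: "('a \<times> 'a) set" and H S
  assume a: "\<not> (infinite H \<or> acyclic_sub E H)" "\<not> strongly_connected E H" "S \<in> sccs E H"
  then have "S \<subset> H" by (rule_tac scc_proper_subset)
  then show "((E, S), E, H) \<in> measure (\<lambda>(E, H). card H)"
    using a(1) by (simp add: psubset_card_mono)
qed

declare cr.simps[simp del]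

text \<open>A vsc-position: X is a word over V, and R is a strongly connected component of
G minus let(X), or R is empty (the robber has been captured).\<close>

type_synonym 'a position = "'a list \<times> 'a set"

definition vsc_pos :: "'a set \<Rightarrow> ('a \<times> 'a) set \<Rightarrow> 'a position \<Rightarrow> bool" where
  "vsc_pos V E p \<longleftrightarrow> set (fst p) \<subseteq> V \<and> (snd p \<in> sccs E (V - set (fst p)) \<or> snd p = {})"

definition vsc_succ :: "'a set \<Rightarrow> ('a \<times> 'a) set \<Rightarrow> 'a position \<Rightarrow> 'a position \<Rightarrow> bool" where
  "vsc_succ V E p q \<longleftrightarrow>
     (if p = ([], V) \<and> \<not> vsc_pos V E ([], V)
      then fst q = [] \<and> vsc_pos V E q
      else vsc_pos V E q
        \<and> (prefix (fst p) (fst q) \<or> prefix (fst q) (fst p))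
        \<and> card ((set (fst p) - set (fst q)) \<union> (set (fst q) - set (fst p))) = 1
        \<and> (\<forall>v'\<in>snd q. \<exists>v\<in>snd p. same_scc E (V - (set (fst p) \<inter> set (fst q))) v v'))"

text \<open>A search of length N (finite, or infinite if N = \<infinity>) is the sequence s 0, s 1, ...
 restricted to indices i < N.\<close>

definition vsc_search :: "'a set \<Rightarrow> ('a \<times> 'a) set \<Rightarrow> 'a position \<Rightarrow> enat \<Rightarrow> (nat \<Rightarrow> 'a position) \<Rightarrow> bool" where
  "vsc_search V E p0 N s \<longleftrightarrow> 1 \<le> N \<and> s 0 = p0 \<and>
     (\<forall>i. enat (Suc i) < N \<longrightarrow> vsc_succ V E (s i) (s (Suc i)))"

definition search_complete :: "enat \<Rightarrow> (nat \<Rightarrow> 'a position) \<Rightarrow> bool" where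
  "search_complete N s \<longleftrightarrow> N = \<infinity> \<or> (\<exists>n. enat n < N \<and> snd (s n) = {})"

definition search_winning :: "enat \<Rightarrow> (nat \<Rightarrow> 'a position) \<Rightarrow> bool" where
  "search_winning N s \<longleftrightarrow> (\<exists>n. enat n < N \<and> snd (s n) = {})"

definition search_stationary :: "enat \<Rightarrow> (nat \<Rightarrow> 'a position) \<Rightarrow> bool" where
  "search_stationary N s \<longleftrightarrow>
     (\<forall>i. enat (Suc i) < N \<and> snd (s i) \<noteq> {} \<longrightarrow> prefix (fst (s i)) (fst (s (Suc i))))"

definition search_uses_at_most :: "nat \<Rightarrow> enat \<Rightarrow> (nat \<Rightarrow> 'a position) \<Rightarrow> bool" where
  "search_uses_at_most k N s \<longleftrightarrow> (\<forall>i. enat i < N \<longrightarrow> length (fst (s i)) \<le> k)"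

definition consistent_with :: "('a position \<Rightarrow> 'a list) \<Rightarrow> enat \<Rightarrow> (nat \<Rightarrow> 'a position) \<Rightarrow> bool" where
  "consistent_with \<sigma> N s \<longleftrightarrow> (\<forall>i. enat (Suc i) < N \<longrightarrow> fst (s (Suc i)) = \<sigma> (s i))"

definition vsc_strategy :: "'a set \<Rightarrow> ('a \<times> 'a) set \<Rightarrow> ('a position \<Rightarrow> 'a list) \<Rightarrow> bool" where
  "vsc_strategy V E \<sigma> \<longleftrightarrow>
     (\<forall>p. vsc_pos V E p \<or> p = ([], V) \<longrightarrow> (\<exists>R'. vsc_succ V E p (\<sigma> p, R')))"

definition strategy_has :: "'a set \<Rightarrow> ('a \<times> 'a) set \<Rightarrow> ('a position \<Rightarrow> 'a list)
    \<Rightarrow> (enat \<Rightarrow> (nat \<Rightarrow> 'a position) \<Rightarrow> bool) \<Rightarrow> bool" where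
  "strategy_has V E \<sigma> P \<longleftrightarrow>
     (\<forall>N s. vsc_search V E ([], V) N s \<and> search_complete N s \<and> consistent_with \<sigma> N s \<longrightarrow> P N s)"

definition sstat_vsc :: "'a set \<Rightarrow> ('a \<times> 'a) set \<Rightarrow> nat" where
  "sstat_vsc V E = (LEAST k. \<exists>\<sigma>. vsc_strategy V E \<sigma>
       \<and> strategy_has V E \<sigma> search_winning
       \<and> strategy_has V E \<sigma> search_stationary
       \<and> strategy_has V E \<sigma> (search_uses_at_most k))"

end

theory Submission
  imports Defs
begin

lemma reach_mono: "H1 \<subseteq> H2 \<Longrightarrow> reach E H1 u v \<Longrightarrow> reach E H2 u v"
proof -
  assume a: "H1 \<subseteq> H2" "reach E H1 u v"
  have s: "E \<inter> (H1 \<times> H1) \<subseteq> E \<inter> (H2 \<times> H2)" using a(1) by auto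
  have "(u, v) \<in> (E \<inter> (H1 \<times> H1))\<^sup>*" using a(2) unfolding reach_def .
  then have "(u, v) \<in> (E \<inter> (H2 \<times> H2))\<^sup>*" using rtrancl_mono[OF s] by (rule subsetD[rotated])
  then show ?thesis unfolding reach_def .
qed

lemma reach_trans: "reach E H u v \<Longrightarrow> reach E H v w \<Longrightarrow> reach E H u w"
  unfolding reach_def by (rule rtrancl_trans)

lemma same_scc_sym: "same_scc E H u v \<Longrightarrow> same_scc E H v u"
  unfolding same_scc_def by (elim conjE) (intro conjI)

lemma same_scc_trans: "same_scc E H u v \<Longrightarrow> same_scc E H v w \<Longrightarrow> same_scc E H u w"
  unfolding same_scc_def using reach_trans[of E H] by meson

lemma same_scc_refl: "u \<in> H \<Longrightarrow> same_scc E H u u"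
  unfolding same_scc_def reach_def by simp

lemma same_scc_mono: "H1 \<subseteq> H2 \<Longrightarrow> same_scc E H1 u v \<Longrightarrow> same_scc E H2 u v"
  unfolding same_scc_def using reach_mono[of H1 H2 E] by (meson subsetD)

lemma sccs_sub: "S \<in> sccs E H \<Longrightarrow> S \<subseteq> H"
  unfolding sccs_def same_scc_def by auto

lemma sccs_ne: "S \<in> sccs E H \<Longrightarrow> S \<noteq> {}"
proof -
  assume "S \<in> sccs E H"
  then obtain u where "u \<in> H" "S = {v. same_scc E H u v}" unfolding sccs_def by blast
  then show ?thesis using same_scc_refl[of u H E] by auto
qed

lemma sccs_repr: "S \<in> sccs E H \<Longrightarrow> w \<in> S \<Longrightarrow> S = {x. same_scc E H w x}"
proof -
  assume a: "S \<in> sccs E H" "w \<in> S"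
  then obtain u where u: "S = {v. same_scc E H u v}" unfolding sccs_def by blast
  have uw: "same_scc E H u w" using a(2) u by simp
  show ?thesis
  proof (rule set_eqI)
    fix x show "x \<in> S \<longleftrightarrow> x \<in> {x. same_scc E H w x}"
      using u uw same_scc_trans[of E H u w x] same_scc_trans[of E H w u x] same_scc_sym[OF uw] by auto
  qed
qed

lemma sccs_closed: "S \<in> sccs E H \<Longrightarrow> w \<in> S \<Longrightarrow> same_scc E H w v \<Longrightarrow> v \<in> S"
  using sccs_repr[of S E H w] by simp

lemma path_in_scc_aux:
  assumes "(u, y) \<in> (E \<inter> (H \<times> H))\<^sup>*"
  shows "(y, u) \<in> (E \<inter> (H \<times> H))\<^sup>* \<longrightarrow> u \<in> H \<longrightarrow>
     (u, y) \<in> (E \<inter> ({x. same_scc E H u x} \<times> {x. same_scc E H u x}))\<^sup>*"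
  using assms
proof (induction rule: rtrancl_induct)
  case base
  then show ?case by simp
next
  case (step y z)
  show ?case
  proof (intro impI)
    assume zu: "(z, u) \<in> (E \<inter> (H \<times> H))\<^sup>*" and uH: "u \<in> H"
    have yu: "(y, u) \<in> (E \<inter> (H \<times> H))\<^sup>*" using step(2) zu by (meson converse_rtrancl_into_rtrancl)
    have IH: "(u, y) \<in> (E \<inter> ({x. same_scc E H u x} \<times> {x. same_scc E H u x}))\<^sup>*"
      using step(3) yu uH by blast
    have yH: "y \<in> H" "z \<in> H" using step(2) by auto
    have "same_scc E H u y" using step(1) yu uH yH unfolding same_scc_def reach_def by auto
    moreover have "same_scc E H u z" using step(1) step(2) zu uH yH unfolding same_scc_def reach_def
      by (meson rtrancl.rtrancl_into_rtrancl)
    ultimately have "(y, z) \<in> E \<inter> ({x. same_scc E H u x} \<times> {x. same_scc E H u x})"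
      using step(2) by simp
    then show "(u, z) \<in> (E \<inter> ({x. same_scc E H u x} \<times> {x. same_scc E H u x}))\<^sup>*"
      by (rule rtrancl.rtrancl_into_rtrancl[OF IH])
  qed
qed

lemma path_in_scc: "same_scc E H u y \<Longrightarrow> reach E {x. same_scc E H u x} u y"
proof -
  assume a: "same_scc E H u y"
  have "(u, y) \<in> (E \<inter> (H \<times> H))\<^sup>*" "(y, u) \<in> (E \<inter> (H \<times> H))\<^sup>*" "u \<in> H"
    using a unfolding same_scc_def reach_def by auto
  then show ?thesis unfolding reach_def using path_in_scc_aux[of u y E H] by simp
qed

lemma scc_strongly_connected:
  assumes "S \<in> sccs E H" shows "strongly_connected E S"
  unfolding strongly_connected_def
proof (intro conjI ballI)
  show "S \<noteq> {}" using sccs_ne assms .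
  fix x y assume "x \<in> S" "y \<in> S"
  then have S: "S = {z. same_scc E H x z}" using sccs_repr[OF assms] by simp
  then have "same_scc E H x y" using \<open>y \<in> S\<close> by simp
  then have "reach E {z. same_scc E H x z} x y" by (rule path_in_scc)
  then show "reach E S x y" using S by simp
qed

lemma sc_in_sccs:
  assumes "strongly_connected E H" shows "H \<in> sccs E H"
proof -
  obtain u where u: "u \<in> H" using assms unfolding strongly_connected_def by blast
  have "H = {v. same_scc E H u v}" using assms u unfolding strongly_connected_def same_scc_def by auto
  then show ?thesis using u unfolding sccs_def by blast
qed

lemma sccs_restrict:
  assumes R: "R \<in> sccs E H" and HH: "H' \<subseteq> H" and T: "T \<in> sccs E (R \<inter> H')"
  shows "T \<in> sccs E H'"
proof -
  obtain u where u: "u \<in> R \<inter> H'" "T = {w. same_scc E (R \<inter> H') u w}"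
    using T unfolding sccs_def by blast
  have "same_scc E (R \<inter> H') u w \<longleftrightarrow> same_scc E H' u w" for w
  proof
    assume "same_scc E (R \<inter> H') u w" then show "same_scc E H' u w"
      using same_scc_mono[of "R \<inter> H'" H'] by blast
  next
    assume a: "same_scc E H' u w"
    define S' where "S' = {x. same_scc E H' u x}"
    have "S' \<subseteq> R \<inter> H'"
    proof
      fix x assume "x \<in> S'"
      then have "same_scc E H' u x" unfolding S'_def by simp
      then have "same_scc E H u x" "x \<in> H'" using same_scc_mono[OF HH] unfolding same_scc_def by auto
      then show "x \<in> R \<inter> H'" using sccs_closed[OF R] u by blast
    qed
    have r1: "reach E S' u w" using path_in_scc[OF a] unfolding S'_def .
    have Seq: "{x. same_scc E H' w x} = S'" unfolding S'_def
      using same_scc_trans[OF same_scc_sym[OF a]] same_scc_trans[OF a] by auto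
    have r2: "reach E S' w u" using path_in_scc[OF same_scc_sym[OF a]] unfolding Seq .
    have wS: "w \<in> S'" using a unfolding S'_def by simp
    have uS: "u \<in> S'" using u same_scc_refl unfolding S'_def by fastforce
    show "same_scc E (R \<inter> H') u w"
      unfolding same_scc_def using r1 r2 wS uS \<open>S' \<subseteq> R \<inter> H'\<close>
        reach_mono[of S' "R \<inter> H'" E u w] reach_mono[of S' "R \<inter> H'" E w u] by auto
  qed
  then have "T = {w. same_scc E H' u w}" using u by auto
  then show ?thesis using u unfolding sccs_def by blast
qed

lemma acyclic_sub_mono:
  assumes "S \<subseteq> H" "acyclic_sub E H" shows "acyclic_sub E S"
  unfolding acyclic_sub_def
proof
  fix u assume u: "u \<in> S"
  have s: "E \<inter> (S \<times> S) \<subseteq> E \<inter> (H \<times> H)" using assms(1) by auto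
  show "(u, u) \<notin> (E \<inter> (S \<times> S))\<^sup>+"
  proof
    assume "(u, u) \<in> (E \<inter> (S \<times> S))\<^sup>+"
    then have "(u, u) \<in> (E \<inter> (H \<times> H))\<^sup>+" using trancl_mono[OF _ s] by blast
    then show False using assms u unfolding acyclic_sub_def by blast
  qed
qed

lemma cr_acyc: "acyclic_sub E H \<Longrightarrow> cr E H = 0"
  by (subst cr.simps) simp

lemma cr_sc: "finite H \<Longrightarrow> \<not> acyclic_sub E H \<Longrightarrow> strongly_connected E H \<Longrightarrow>
   cr E H = 1 + Min ((\<lambda>v. cr E (H - {v})) ` H)"
  by (subst cr.simps) simp

lemma cr_nsc: "finite H \<Longrightarrow> \<not> acyclic_sub E H \<Longrightarrow> \<not> strongly_connected E H \<Longrightarrow>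
   cr E H = Max ((\<lambda>S. cr E S) ` sccs E H)"
  by (subst cr.simps) simp

lemma sccs_image: "sccs E H = (\<lambda>u. {v. same_scc E H u v}) ` H"
  unfolding sccs_def by auto

lemma finite_sccs: "finite H \<Longrightarrow> finite (sccs E H)"
  unfolding sccs_image by simp

lemma sccs_nonempty: "H \<noteq> {} \<Longrightarrow> sccs E H \<noteq> {}"
  unfolding sccs_image by simp

lemma cr_scc_exists:
  assumes "finite H" "H \<noteq> {}"
  shows "\<exists>S\<in>sccs E H. cr E S = cr E H"
proof (cases "acyclic_sub E H")
  case True
  obtain S where S: "S \<in> sccs E H" using sccs_nonempty[OF assms(2)] by blast
  have "acyclic_sub E S" using acyclic_sub_mono[OF sccs_sub[OF S] True] .
  then show ?thesis using S cr_acyc[OF True] cr_acyc[of E S] by auto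
next
  case False
  show ?thesis
  proof (cases "strongly_connected E H")
    case True
    then show ?thesis using sc_in_sccs[OF True] by blast
  next
    case nsc: False
    have "cr E H = Max ((\<lambda>S. cr E S) ` sccs E H)" using cr_nsc[OF assms(1) False nsc] .
    moreover have "Max ((\<lambda>S. cr E S) ` sccs E H) \<in> (\<lambda>S. cr E S) ` sccs E H"
      using finite_sccs[OF assms(1)] sccs_nonempty[OF assms(2)] by (intro Max_in) auto
    ultimately show ?thesis by force
  qed
qed

lemma cr_del:
  assumes "finite R" "strongly_connected E R" "v \<in> R"
  shows "cr E R \<le> 1 + cr E (R - {v})"
proof (cases "acyclic_sub E R")
  case True then show ?thesis using cr_acyc[OF True] by simp
next
  case False
  have "Min ((\<lambda>v. cr E (R - {v})) ` R) \<le> cr E (R - {v})"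
    using assms by (intro Min_le) auto
  then show ?thesis using cr_sc[OF assms(1) False assms(2)] by simp
qed

lemma cr_single: "(v, v) \<notin> E \<Longrightarrow> cr E {v} = 0"
proof -
  assume a: "(v, v) \<notin> E"
  have "E \<inter> ({v} \<times> {v}) = {}" using a by auto
  then have "acyclic_sub E {v}" unfolding acyclic_sub_def by simp
  then show ?thesis by (rule cr_acyc)
qed

lemma vsc_succ_ns:
  assumes "vsc_pos V E p"
  shows "vsc_succ V E p q \<longleftrightarrow> (vsc_pos V E q
        \<and> (prefix (fst p) (fst q) \<or> prefix (fst q) (fst p))
        \<and> card ((set (fst p) - set (fst q)) \<union> (set (fst q) - set (fst p))) = 1
        \<and> (\<forall>v'\<in>snd q. \<exists>v\<in>snd p. same_scc E (V - (set (fst p) \<inter> set (fst q))) v v'))"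
proof -
  have "\<not> (p = ([], V) \<and> \<not> vsc_pos V E ([], V))" using assms by auto
  then show ?thesis unfolding vsc_succ_def by (simp only: if_False)
qed

lemma symdiff_one:
  assumes "prefix X X'" "card ((set X - set X') \<union> (set X' - set X)) = 1"
  obtains v where "set X' = insert v (set X)" "v \<notin> set X"
proof -
  have "set X \<subseteq> set X'" using assms(1) by (rule set_mono_prefix)
  then have "(set X - set X') \<union> (set X' - set X) = set X' - set X" by auto
  then have "card (set X' - set X) = 1" using assms(2) by simp
  then obtain v where "set X' - set X = {v}" by (rule card_1_singletonE)
  then show ?thesis using that \<open>set X \<subseteq> set X'\<close> by blast
qed

lemma robber_step:
  assumes dg: "digraph V E" and R: "R \<in> sccs E (V - set X)" and XV: "set X \<subseteq> V"
    and pre: "prefix X X'" and X'V: "set X' \<subseteq> V"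
    and cd: "card ((set X - set X') \<union> (set X' - set X)) = 1"
  shows "\<exists>R'. vsc_succ V E (X, R) (X', R') \<and>
     ((R' \<noteq> {} \<and> cr E R + card (set X) \<le> cr E R' + card (set X')) \<or>
      (R' = {} \<and> cr E R + card (set X) + 1 \<le> card (set X')))"
proof -
  obtain v where v: "set X' = insert v (set X)" "v \<notin> set X" using symdiff_one[OF pre cd] .
  have finV: "finite V" using dg unfolding digraph_def by simp
  have RV: "R \<subseteq> V - set X" using sccs_sub[OF R] .
  have finR: "finite R" using RV finV finite_subset by blast
  have cX': "card (set X') = Suc (card (set X))" using v by simp
  have pos: "vsc_pos V E (X, R)" unfolding vsc_pos_def using XV R by simp
  have int: "set X \<inter> set X' = set X" using v by auto
  have succ: "vsc_succ V E (X, R) (X', R')" if "R' \<subseteq> R" "vsc_pos V E (X', R')" for R'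
    unfolding vsc_succ_ns[OF pos]
  proof (intro conjI ballI)
    show "vsc_pos V E (X', R')" by fact
    show "prefix (fst (X, R)) (fst (X', R')) \<or> prefix (fst (X', R')) (fst (X, R))" using pre by simp
    show "card ((set (fst (X, R)) - set (fst (X', R'))) \<union> (set (fst (X', R')) - set (fst (X, R)))) = 1"
      using cd by simp
    fix w assume "w \<in> snd (X', R')"
    then have "w \<in> R" "w \<in> V - set X" using that RV by auto
    then show "\<exists>u\<in>snd (X, R). same_scc E (V - (set (fst (X, R)) \<inter> set (fst (X', R')))) u w"
      using same_scc_refl[of w "V - set X" E] int by auto
  qed
  have sub': "V - set X' \<subseteq> V - set X" using v by auto
  show ?thesis
  proof (cases "v \<in> R")
    case False
    have eq: "R \<inter> (V - set X') = R" using RV v False by auto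
    have "R \<in> sccs E (R \<inter> (V - set X'))"
      unfolding eq by (rule sc_in_sccs[OF scc_strongly_connected[OF R]])
    then have "R \<in> sccs E (V - set X')" by (rule sccs_restrict[OF R sub'])
    then have "vsc_pos V E (X', R)" unfolding vsc_pos_def using X'V by simp
    then have "vsc_succ V E (X, R) (X', R)" using succ by simp
    moreover have "R \<noteq> {}" using sccs_ne[OF R] .
    ultimately show ?thesis using cX' by auto
  next
    case True
    show ?thesis
    proof (cases "R - {v} = {}")
      case True
      then have Rv: "R = {v}" using \<open>v \<in> R\<close> by auto
      have "(v, v) \<notin> E" using dg unfolding digraph_def by simp
      then have "cr E R = 0" using Rv cr_single by simp
      moreover have "vsc_pos V E (X', {})" unfolding vsc_pos_def using X'V by simp
      ultimately show ?thesis using succ[of "{}"] cX' by auto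
    next
      case False
      have finRv: "finite (R - {v})" using finR by simp
      obtain S where S: "S \<in> sccs E (R - {v})" "cr E S = cr E (R - {v})"
        using cr_scc_exists[OF finRv False] by blast
      have eq: "R \<inter> (V - set X') = R - {v}" using RV v by auto
      have "S \<in> sccs E (V - set X')" using sccs_restrict[OF R sub'] S(1) eq by simp
      then have "vsc_pos V E (X', S)" unfolding vsc_pos_def using X'V by simp
      moreover have "S \<subseteq> R" using sccs_sub[OF S(1)] by auto
      ultimately have "vsc_succ V E (X, R) (X', S)" using succ by simp
      moreover have "cr E R \<le> 1 + cr E (R - {v})"
        using cr_del[OF finR scc_strongly_connected[OF R] \<open>v \<in> R\<close>] .
      moreover have "S \<noteq> {}" using sccs_ne[OF S(1)] .
      ultimately show ?thesis using cX' S(2) by auto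
    qed
  qed
qed

lemma vsc_succ_pos: "vsc_succ V E p q \<Longrightarrow> vsc_pos V E q"
  unfolding vsc_succ_def by (auto split: if_splits)

lemma lower_bound:
  assumes dg: "digraph V E" and st: "vsc_strategy V E \<sigma>"
    and win: "strategy_has V E \<sigma> search_winning"
    and stat: "strategy_has V E \<sigma> search_stationary"
    and use: "strategy_has V E \<sigma> (search_uses_at_most k)"
  shows "1 + cr E V \<le> k"
proof -
  have finV: "finite V" and neV: "V \<noteq> {}" using dg unfolding digraph_def by auto
  define spc where "spc p \<longleftrightarrow> p = ([], V) \<and> \<not> vsc_pos V E ([], V)" for p :: "'a position"
  define Good where "Good p X' R' \<longleftrightarrow> (snd p \<noteq> {} \<and> prefix (fst p) X' \<longrightarrow>
     (if spc p then R' \<noteq> {} \<and> cr E V \<le> cr E R'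
      else ((R' \<noteq> {} \<and> cr E (snd p) + card (set (fst p)) \<le> cr E R' + card (set X')) \<or>
            (R' = {} \<and> cr E (snd p) + card (set (fst p)) + 1 \<le> card (set X')))))"
    for p :: "'a position" and X' R'
  define step where "step p = (\<sigma> p, SOME R'. vsc_succ V E p (\<sigma> p, R') \<and> Good p (\<sigma> p) R')" for p
  define s where "s i = (step ^^ i) ([], V)" for i
  have s0: "s 0 = ([], V)" unfolding s_def by simp
  have sS: "s (Suc i) = step (s i)" for i unfolding s_def by simp
  have ex: "\<exists>R'. vsc_succ V E p (\<sigma> p, R') \<and> Good p (\<sigma> p) R'" if pp: "vsc_pos V E p \<or> p = ([], V)" for p
  proof -
    obtain R0 where R0: "vsc_succ V E p (\<sigma> p, R0)" using st pp unfolding vsc_strategy_def by blast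
    show ?thesis
    proof (cases "snd p \<noteq> {} \<and> prefix (fst p) (\<sigma> p)")
      case False then show ?thesis using R0 unfolding Good_def by blast
    next
      case True
      show ?thesis
      proof (cases "spc p")
        case sp: True
        have p: "p = ([], V)" and nv: "\<not> vsc_pos V E ([], V)" using sp unfolding spc_def by auto
        have sig: "\<sigma> p = []" using R0 p nv unfolding vsc_succ_def by simp
        obtain S where S: "S \<in> sccs E V" "cr E S = cr E V" using cr_scc_exists[OF finV neV] by blast
        have "vsc_pos V E ([], S)" unfolding vsc_pos_def using S by simp
        then have "vsc_succ V E p (\<sigma> p, S)" unfolding vsc_succ_def using p nv sig by simp
        moreover have "Good p (\<sigma> p) S" unfolding Good_def using sp S sccs_ne[OF S(1)] by simp
        ultimately show ?thesis by blast
      next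
        case nsp: False
        have pos: "vsc_pos V E p" using pp nsp unfolding spc_def by auto
        obtain X R where p: "p = (X, R)" by (cases p)
        have R: "R \<in> sccs E (V - set X)" and XV: "set X \<subseteq> V"
          using pos True p unfolding vsc_pos_def by auto
        have pre: "prefix X (\<sigma> p)" using True p by simp
        have R0': "vsc_pos V E (\<sigma> p, R0)"
          "card ((set X - set (\<sigma> p)) \<union> (set (\<sigma> p) - set X)) = 1"
        proof -
          have "vsc_pos V E (\<sigma> p, R0) \<and> card ((set (fst p) - set (\<sigma> p)) \<union> (set (\<sigma> p) - set (fst p))) = 1"
            using R0 unfolding vsc_succ_ns[OF pos] by simp
          then show "vsc_pos V E (\<sigma> p, R0)" "card ((set X - set (\<sigma> p)) \<union> (set (\<sigma> p) - set X)) = 1"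
            using p by auto
        qed
        have X'V: "set (\<sigma> p) \<subseteq> V" using R0'(1) unfolding vsc_pos_def by simp
        obtain R' where R': "vsc_succ V E (X, R) (\<sigma> p, R')"
          "(R' \<noteq> {} \<and> cr E R + card (set X) \<le> cr E R' + card (set (\<sigma> p))) \<or>
           (R' = {} \<and> cr E R + card (set X) + 1 \<le> card (set (\<sigma> p)))"
          using robber_step[OF dg R XV pre X'V R0'(2)] by blast
        have "Good p (\<sigma> p) R'" unfolding Good_def using nsp R'(2) p by simp
        then show ?thesis using R'(1) p by blast
      qed
    qed
  qed
  have inv: "vsc_pos V E (s i) \<or> s i = ([], V)" for i
  proof (induction i)
    case 0 then show ?case using s0 by simp
  next
    case (Suc i)
    have "vsc_succ V E (s i) (step (s i))"
      unfolding step_def using someI_ex[OF ex[OF Suc]] by simp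
    then show ?case using vsc_succ_pos sS by metis
  qed
  have stepP: "vsc_succ V E (s i) (s (Suc i)) \<and> Good (s i) (fst (s (Suc i))) (snd (s (Suc i)))" for i
    unfolding sS step_def using someI_ex[OF ex[OF inv[of i]]] by simp
  have fst_step: "fst (s (Suc i)) = \<sigma> (s i)" for i unfolding sS step_def by simp
  have srch: "vsc_search V E ([], V) \<infinity> s \<and> search_complete \<infinity> s \<and> consistent_with \<sigma> \<infinity> s"
    unfolding vsc_search_def search_complete_def consistent_with_def
    using s0 stepP fst_step by simp
  have "search_winning \<infinity> s" using win srch unfolding strategy_has_def by blast
  then have exn: "\<exists>n. snd (s n) = {}" unfolding search_winning_def by blast
  have statS: "snd (s i) \<noteq> {} \<Longrightarrow> prefix (fst (s i)) (fst (s (Suc i)))" for i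
    using stat srch unfolding strategy_has_def search_stationary_def by simp
  have useS: "length (fst (s i)) \<le> k" for i
    using use srch unfolding strategy_has_def search_uses_at_most_def by simp
  define n where "n = (LEAST n. snd (s n) = {})"
  have sn: "snd (s n) = {}" unfolding n_def using exn by (rule LeastI_ex)
  have before: "i < n \<Longrightarrow> snd (s i) \<noteq> {}" for i unfolding n_def by (rule not_less_Least)
  have n0: "n \<noteq> 0" using sn s0 neV by auto
  have claim: "i < n \<Longrightarrow> cr E V \<le> cr E (snd (s i)) + card (set (fst (s i)))" for i
  proof (induction i)
    case 0 then show ?case using s0 by simp
  next
    case (Suc i)
    have ne: "snd (s i) \<noteq> {}" "snd (s (Suc i)) \<noteq> {}" using before Suc by auto
    have pre: "prefix (fst (s i)) (fst (s (Suc i)))" using statS ne(1) .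
    have G: "Good (s i) (fst (s (Suc i))) (snd (s (Suc i)))" using stepP by blast
    show ?case
    proof (cases "spc (s i)")
      case True then show ?thesis using G ne pre unfolding Good_def by auto
    next
      case False
      then have "cr E (snd (s i)) + card (set (fst (s i))) \<le> cr E (snd (s (Suc i))) + card (set (fst (s (Suc i))))"
        using G ne pre unfolding Good_def by auto
      then show ?thesis using Suc by linarith
    qed
  qed
  obtain m where m: "n = Suc m" using n0 not0_implies_Suc by blast
  have nem: "snd (s m) \<noteq> {}" using before m by simp
  have pre: "prefix (fst (s m)) (fst (s (Suc m)))" using statS nem .
  have G: "Good (s m) (fst (s (Suc m))) (snd (s (Suc m)))" using stepP by blast
  have cm: "cr E V \<le> cr E (snd (s m)) + card (set (fst (s m)))" using claim m by simp
  have nsp: "\<not> spc (s m)" using G nem pre sn m unfolding Good_def by auto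
  have "cr E (snd (s m)) + card (set (fst (s m))) + 1 \<le> card (set (fst (s n)))"
    using G nem pre sn m nsp unfolding Good_def by auto
  moreover have "card (set (fst (s n))) \<le> length (fst (s n))" by (rule card_length)
  ultimately show ?thesis using cm useS[of n] by linarith
qed

lemma prefix_drop_one: "X \<noteq> [] \<Longrightarrow> \<exists>Y. prefix Y X \<and> card (set X - set Y) = 1"
proof (induction X rule: rev_induct)
  case Nil then show ?case by simp
next
  case (snoc a X)
  show ?case
  proof (cases "a \<in> set X")
    case False
    have "set (X @ [a]) - set X = {a}" using False by auto
    then show ?thesis by (intro exI[of _ X]) simp
  next
    case True
    then have "X \<noteq> []" by auto
    then obtain Y where "prefix Y X" "card (set X - set Y) = 1" using snoc.IH by blast
    moreover have "set (X @ [a]) = set X" using True by auto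
    moreover have "prefix Y (X @ [a])" using \<open>prefix Y X\<close> by (metis prefix_def append_assoc)
    ultimately show ?thesis by (intro exI[of _ Y]) auto
  qed
qed

lemma succ_add_one:
  assumes "vsc_pos V E (X, R)" "v \<in> V" "v \<notin> set X"
  shows "vsc_succ V E (X, R) (X @ [v], {})"
proof -
  have "set (X @ [v]) - set X = {v}" using assms(3) by auto
  moreover have "set X - set (X @ [v]) = {}" by auto
  moreover have "set (X @ [v]) \<subseteq> V" using assms unfolding vsc_pos_def by auto
  ultimately show ?thesis unfolding vsc_succ_ns[OF assms(1)] vsc_pos_def by simp
qed

lemma succ_drop_one:
  assumes "vsc_pos V E (X, R)" "prefix Y X" "card (set X - set Y) = 1"
  shows "vsc_succ V E (X, R) (Y, {})"
proof -
  have "set Y \<subseteq> set X" using assms(2) by (rule set_mono_prefix)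
  then have "(set X - set Y) \<union> (set Y - set X) = set X - set Y" by auto
  moreover have "set Y \<subseteq> V" using assms(1) \<open>set Y \<subseteq> set X\<close> unfolding vsc_pos_def by auto
  ultimately show ?thesis unfolding vsc_succ_ns[OF assms(1)] vsc_pos_def using assms(2,3) by simp
qed

lemma upper_exists:
  assumes dg: "digraph V E"
  shows "\<exists>k \<sigma>. vsc_strategy V E \<sigma> \<and> strategy_has V E \<sigma> search_winning
     \<and> strategy_has V E \<sigma> search_stationary \<and> strategy_has V E \<sigma> (search_uses_at_most k)"
proof -
  have finV: "finite V" and neV: "V \<noteq> {}" using dg unfolding digraph_def by auto
  define spc where "spc p \<longleftrightarrow> p = ([], V) \<and> \<not> vsc_pos V E ([], V)" for p :: "'a position"
  define \<sigma> where "\<sigma> p = (if spc p then [] else if snd p \<noteq> {} then fst p @ [SOME v. v \<in> snd p]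
      else if V - set (fst p) \<noteq> {} then fst p @ [SOME v. v \<in> V - set (fst p)]
      else (SOME Y. prefix Y (fst p) \<and> card (set (fst p) - set Y) = 1))" for p
  define ok where "ok p \<longleftrightarrow> vsc_pos V E p \<or> p = ([], V)" for p :: "'a position"
  have ok_pos: "ok p \<Longrightarrow> \<not> spc p \<Longrightarrow> vsc_pos V E p" for p unfolding ok_def spc_def by auto
  have ok_sub: "ok p \<Longrightarrow> set (fst p) \<subseteq> V \<and> snd p \<subseteq> V" for p
    unfolding ok_def vsc_pos_def using sccs_sub by fastforce
  have Rscc: "vsc_pos V E p \<Longrightarrow> snd p \<noteq> {} \<Longrightarrow> snd p \<in> sccs E (V - set (fst p))" for p
    unfolding vsc_pos_def by auto
  have c2: "\<not> spc p \<Longrightarrow> ok p \<Longrightarrow> snd p \<noteq> {} \<Longrightarrow>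
      \<exists>v. \<sigma> p = fst p @ [v] \<and> v \<in> snd p \<and> v \<notin> set (fst p) \<and> v \<in> V" for p
  proof -
    assume a: "\<not> spc p" "ok p" "snd p \<noteq> {}"
    have R: "snd p \<in> sccs E (V - set (fst p))" using Rscc[OF ok_pos[OF a(2,1)] a(3)] .
    have "(SOME v. v \<in> snd p) \<in> snd p" using a(3) by (simp add: some_in_eq)
    then show ?thesis using a sccs_sub[OF R] unfolding \<sigma>_def by auto
  qed
  have c3: "\<not> spc p \<Longrightarrow> snd p = {} \<Longrightarrow> V - set (fst p) \<noteq> {} \<Longrightarrow>
      \<exists>v. \<sigma> p = fst p @ [v] \<and> v \<notin> set (fst p) \<and> v \<in> V" for p
  proof -
    assume a: "\<not> spc p" "snd p = {}" "V - set (fst p) \<noteq> {}"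
    obtain v0 where "v0 \<in> V - set (fst p)" using a(3) by blast
    then have "(SOME v. v \<in> V - set (fst p)) \<in> V - set (fst p)" by (rule someI)
    then show ?thesis using a unfolding \<sigma>_def by auto
  qed
  have c4: "\<not> spc p \<Longrightarrow> ok p \<Longrightarrow> snd p = {} \<Longrightarrow> V - set (fst p) = {} \<Longrightarrow>
      prefix (\<sigma> p) (fst p) \<and> card (set (fst p) - set (\<sigma> p)) = 1" for p
  proof -
    assume a: "\<not> spc p" "ok p" "snd p = {}" "V - set (fst p) = {}"
    have "fst p \<noteq> []" using a(4) neV by auto
    then have "\<exists>Y. prefix Y (fst p) \<and> card (set (fst p) - set Y) = 1" by (rule prefix_drop_one)
    then have "prefix (SOME Y. prefix Y (fst p) \<and> card (set (fst p) - set Y) = 1) (fst p) \<and>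
       card (set (fst p) - set (SOME Y. prefix Y (fst p) \<and> card (set (fst p) - set Y) = 1)) = 1"
      by (rule someI_ex)
    then show ?thesis using a unfolding \<sigma>_def by simp
  qed
  have valid: "vsc_succ V E p (\<sigma> p, {})" if okp: "ok p" for p
  proof (cases "spc p")
    case True
    then show ?thesis unfolding vsc_succ_def \<sigma>_def spc_def vsc_pos_def by auto
  next
    case False
    have pos: "vsc_pos V E p" using ok_pos[OF okp False] .
    obtain X R where p: "p = (X, R)" by (cases p)
    show ?thesis
    proof (cases "snd p \<noteq> {}")
      case True
      then obtain v where "\<sigma> p = X @ [v]" "v \<notin> set X" "v \<in> V" using c2[OF False okp] p by auto
      then show ?thesis using succ_add_one[of V E X R v] pos p by simp
    next
      case e: False
      show ?thesis
      proof (cases "V - set (fst p) \<noteq> {}")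
        case True
        then obtain v where "\<sigma> p = X @ [v]" "v \<notin> set X" "v \<in> V" using c3[OF False] e p by auto
        then show ?thesis using succ_add_one[of V E X R v] pos p by simp
      next
        case False
        then have "prefix (\<sigma> p) X \<and> card (set X - set (\<sigma> p)) = 1"
          using c4[OF \<open>\<not> spc p\<close> okp] e p by auto
        then show ?thesis using succ_drop_one[of V E X R "\<sigma> p"] pos p by simp
      qed
    qed
  qed
  have strat: "vsc_strategy V E \<sigma>" unfolding vsc_strategy_def using valid unfolding ok_def by blast
  have dist_step: "distinct (\<sigma> p)" if dd: "ok p" "distinct (fst p)" for p
  proof (cases "spc p")
    case True then show ?thesis unfolding \<sigma>_def by simp
  next
    case False
    show ?thesis
    proof (cases "snd p \<noteq> {}")
      case True then show ?thesis using c2[OF False dd(1)] dd(2) by auto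
    next
      case e: False
      show ?thesis
      proof (cases "V - set (fst p) \<noteq> {}")
        case True then show ?thesis using c3[OF False] e dd(2) by auto
      next
        case f: False
        then have "prefix (\<sigma> p) (fst p)" using c4[OF False dd(1)] e by auto
        then obtain zs where "fst p = \<sigma> p @ zs" by (auto simp: prefix_def)
        then show ?thesis using dd(2) by (metis distinct_append)
      qed
    qed
  qed
  have stat_step: "prefix (fst p) (\<sigma> p)" if "ok p" "snd p \<noteq> {}" for p
  proof (cases "spc p")
    case True then show ?thesis unfolding spc_def by simp
  next
    case False then show ?thesis using c2[OF False that] by auto
  qed
  have decr: "snd q \<subset> snd p" if tt: "ok p" "snd p \<noteq> {}" "vsc_succ V E p q" "fst q = \<sigma> p" for p q
  proof (cases "spc p")
    case True
    then have p: "p = ([], V)" and nv: "\<not> vsc_pos V E ([], V)" unfolding spc_def by auto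
    have q: "vsc_pos V E q" using vsc_succ_pos[OF tt(3)] .
    have fq: "fst q = []" using tt(4) True unfolding \<sigma>_def by simp
    show ?thesis
    proof (cases "snd q = {}")
      case True then show ?thesis using p neV by auto
    next
      case False
      have "snd q \<in> sccs E V" using q False fq unfolding vsc_pos_def by simp
      moreover have "V \<notin> sccs E V" using nv unfolding vsc_pos_def by simp
      ultimately show ?thesis using p sccs_sub by fastforce
    qed
  next
    case False
    have pos: "vsc_pos V E p" using ok_pos[OF tt(1) False] .
    obtain v where v: "\<sigma> p = fst p @ [v]" "v \<in> snd p" "v \<notin> set (fst p)" using c2[OF False tt(1,2)] by auto
    have R: "snd p \<in> sccs E (V - set (fst p))" using Rscc[OF pos tt(2)] .
    have int: "set (fst p) \<inter> set (fst q) = set (fst p)" using tt(4) v by auto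
    have all: "\<forall>v'\<in>snd q. \<exists>w\<in>snd p. same_scc E (V - set (fst p)) w v'"
      using tt(3) int unfolding vsc_succ_ns[OF pos] by simp
    have "snd q \<subseteq> snd p" using all sccs_closed[OF R] by blast
    moreover have "v \<notin> snd q"
    proof
      assume vq: "v \<in> snd q"
      have "vsc_pos V E q" using vsc_succ_pos[OF tt(3)] .
      then have "snd q \<subseteq> V - set (fst q)" unfolding vsc_pos_def using sccs_sub by blast
      then show False using vq tt(4) v by auto
    qed
    ultimately show ?thesis using v(2) by blast
  qed
  have props: "search_winning N s \<and> search_stationary N s \<and> search_uses_at_most (card V) N s"
    if srch: "vsc_search V E ([], V) N s" and comp: "search_complete N s" and cons: "consistent_with \<sigma> N s"
    for N s
  proof -
    have s0: "s 0 = ([], V)" using srch unfolding vsc_search_def by simp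
    have succ: "enat (Suc i) < N \<Longrightarrow> vsc_succ V E (s i) (s (Suc i))" for i
      using srch unfolding vsc_search_def by simp
    have fsts: "enat (Suc i) < N \<Longrightarrow> fst (s (Suc i)) = \<sigma> (s i)" for i
      using cons unfolding consistent_with_def by simp
    have lt: "enat (Suc i) < N \<Longrightarrow> enat i < N" for i
      by (meson Suc_ile_eq less_imp_le)
    have inv: "enat i < N \<Longrightarrow> ok (s i) \<and> distinct (fst (s i))" for i
    proof (induction i)
      case 0 then show ?case using s0 unfolding ok_def by simp
    next
      case (Suc i)
      have IH: "ok (s i)" "distinct (fst (s i))" using Suc lt by auto
      have "ok (s (Suc i))" using vsc_succ_pos[OF succ[OF Suc(2)]] unfolding ok_def by simp
      moreover have "distinct (fst (s (Suc i)))" using fsts[OF Suc(2)] dist_step[OF IH] by simp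
      ultimately show ?case by simp
    qed
    have stat: "search_stationary N s"
      unfolding search_stationary_def using inv lt fsts stat_step by metis
    have uses: "search_uses_at_most (card V) N s"
      unfolding search_uses_at_most_def
    proof (intro allI impI)
      fix i assume "enat i < N"
      then have "ok (s i)" "distinct (fst (s i))" using inv by auto
      then have "length (fst (s i)) = card (set (fst (s i)))" "set (fst (s i)) \<subseteq> V"
        using ok_sub distinct_card by fastforce+
      then show "length (fst (s i)) \<le> card V" using card_mono[OF finV] by simp
    qed
    have winning: "search_winning N s"
    proof (cases "N = \<infinity>")
      case False then show ?thesis using comp unfolding search_complete_def search_winning_def by blast
    next
      case True
      have cl: "snd (s i) = {} \<or> card (snd (s i)) + i \<le> card V" for i
      proof (induction i)
        case 0 then show ?case using s0 by simp
      next
        case (Suc i)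
        have Ni: "enat (Suc i) < N" using True by simp
        have oki: "ok (s i)" using inv lt[OF Ni] by simp
        show ?case
        proof (cases "snd (s i) = {}")
          case True
          have "\<not> spc (s i)" using True unfolding spc_def using neV by auto
          then have "vsc_pos V E (s i)" using ok_pos oki by simp
          then have "\<forall>v'\<in>snd (s (Suc i)). \<exists>v\<in>snd (s i). same_scc E (V - (set (fst (s i)) \<inter> set (fst (s (Suc i))))) v v'"
            using succ[OF Ni] unfolding vsc_succ_ns[OF \<open>vsc_pos V E (s i)\<close>] by (elim conjE)
          then have "snd (s (Suc i)) = {}" using True by auto
          then show ?thesis by simp
        next
          case False
          have "snd (s (Suc i)) \<subset> snd (s i)" using decr[OF oki False succ[OF Ni] fsts[OF Ni]] .
          moreover have "finite (snd (s i))" using ok_sub[OF oki] finV finite_subset by blast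
          ultimately have "card (snd (s (Suc i))) < card (snd (s i))" by (rule psubset_card_mono[rotated])
          then show ?thesis using Suc False by simp
        qed
      qed
      have "snd (s (Suc (card V))) = {}" using cl[of "Suc (card V)"] by simp
      then show ?thesis unfolding search_winning_def using True by (intro exI[of _ "Suc (card V)"]) simp
    qed
    show ?thesis using winning stat uses by simp
  qed
  show ?thesis
    apply (rule exI[of _ "card V"], rule exI[of _ \<sigma>])
    using strat props unfolding strategy_has_def by blast
qed

theorem lemma2:
  fixes V :: "'a set" and E :: "('a \<times> 'a) set"
  assumes "digraph V E"
  shows "1 + cr E V \<le> sstat_vsc V E"
proof -
  let ?P = "\<lambda>k. \<exists>\<sigma>. vsc_strategy V E \<sigma>
       \<and> strategy_has V E \<sigma> search_winning
       \<and> strategy_has V E \<sigma> search_stationary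
       \<and> strategy_has V E \<sigma> (search_uses_at_most k)"
  have "\<exists>k. ?P k" using upper_exists[OF assms] by blast
  then have "?P (Least ?P)" by (rule LeastI_ex)
  then obtain \<sigma> where "vsc_strategy V E \<sigma>" "strategy_has V E \<sigma> search_winning"
    "strategy_has V E \<sigma> search_stationary" "strategy_has V E \<sigma> (search_uses_at_most (Least ?P))"
    by blast
  then have "1 + cr E V \<le> Least ?P" using lower_bound[OF assms] by blast
  then show ?thesis unfolding sstat_vsc_def .
qed

end
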